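(* Let $d=4k$ with $k>1$, $n=d/2$, $\omega=e^{2\pi i/d}$, and $F_d=(\omega^{jl})_{j,l=0}^{d-1}$ the Fourier matrix. For $\vec\alpha=(\alpha_1,\dots,\alpha_{n-1})\in\mathbb{R}^{n-1}$ define the real $d\times d$ matrix $R_1(\vec\alpha)$ by $R_1(\vec\alpha)_{j,l}=0$ if $j$ is even, $R_1(\vec\alpha)_{j,l}=0$ if $j$ is odd and $l\equiv0\pmod n$, and $R_1(\vec\alpha)_{j,l}=\alpha_{(l\bmod n)}$ otherwise (where $l\bmod n\in\{1,\dots,n-1\}$), and set $R_2(\vec\beta)=R_1(\vec\beta)^t$. Then for all $\vec\alpha,\vec\beta\in\mathbb{R}^{n-1}$ the matrices $F_d\circ\exp\big(i(R_1(\vec\alpha)+R_2(\vec\beta))\big)$ and $F_d\circ\exp\big(i(R_1(\vec\alpha)+R_2(\vec\beta))^t\big)$ are complex Hadamard matrices.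
   Context: A $d\times d$ complex Hadamard matrix has unimodular entries and pairwise orthogonal columns. $\circ$ denotes the entrywise product and $\exp(iR)$ the entrywise exponential $(\exp(iR))_{jl}=e^{iR_{jl}}$; rows and columns are indexed $0,\dots,d-1$. *)

theory Defs
  imports Complex_Main
begin

text \<open>Square d x d complex matrices are represented as functions
  nat \<Rightarrow> nat \<Rightarrow> complex; only entries with indices 0..d-1 matter.\<close>

definition complex_hadamard :: "nat \<Rightarrow> (nat \<Rightarrow> nat \<Rightarrow> complex) \<Rightarrow> bool" where
  "complex_hadamard d H \<longleftrightarrow>
     (\<forall>j<d. \<forall>l<d. norm (H j l) = 1) \<and>
     (\<forall>l<d. \<forall>l'<d. l \<noteq> l' \<longrightarrow> (\<Sum>j<d. H j l * cnj (H j l')) = 0)"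

definition fourier_matrix :: "nat \<Rightarrow> nat \<Rightarrow> nat \<Rightarrow> complex" where
  "fourier_matrix d j l = (exp (2 * pi * \<i> / of_nat d)) ^ (j * l)"

text \<open>R_1(alpha) for parameter n = d/2; alpha is indexed 1..n-1.\<close>
definition R1 :: "nat \<Rightarrow> (nat \<Rightarrow> real) \<Rightarrow> nat \<Rightarrow> nat \<Rightarrow> real" where
  "R1 n \<alpha> j l = (if even j then 0 else if l mod n = 0 then 0 else \<alpha> (l mod n))"

definition R2 :: "nat \<Rightarrow> (nat \<Rightarrow> real) \<Rightarrow> nat \<Rightarrow> nat \<Rightarrow> real" where
  "R2 n \<beta> j l = R1 n \<beta> l j"

end

theory Submission imports Defs "HOL-Analysis.Analysis" begin

lemma sum_2n_pair:
  fixes f :: "nat \<Rightarrow> complex"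
  shows "(\<Sum>j<2*n. f j) = (\<Sum>m<n. f (2*m) + f (2*m+1))"
  by (induction n) (auto simp: mult_2 add.commute add.left_commute)

lemma sum_2n_half:
  fixes f :: "nat \<Rightarrow> complex"
  shows "(\<Sum>j<2*n. f j) = (\<Sum>j<n. f j + f (j+n))"
proof -
  have "(\<Sum>j<2*n. f j) = (\<Sum>j<n. f j) + (\<Sum>j\<in>{n..<n+n}. f j)"
    by (simp add: mult_2 sum.atLeastLessThan_concat[symmetric] lessThan_atLeast0
          flip: sum.atLeastLessThan_concat[of 0 n "n+n"])
  also have "(\<Sum>j\<in>{n..<n+n}. f j) = (\<Sum>j<n. f (j+n))"
    by (metis add_0 lessThan_atLeast0 sum.shift_bounds_nat_ivl)
  finally show ?thesis by (simp add: sum.distrib)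
qed

lemma w_props:
  fixes n :: nat
  assumes "n > 0"
  defines "w \<equiv> exp (2 * pi * \<i> / of_nat (2*n))"
  shows "norm w = 1" "w ^ n = -1" "w ^ (2*n) = 1"
    "\<And>m. w ^ m = 1 \<Longrightarrow> (2*n) dvd m"
proof -
  show "norm w = 1" unfolding w_def by (simp add: norm_exp_eq_Re)
  have "w ^ n = exp (of_nat n * (2 * pi * \<i> / of_nat (2*n)))"
    unfolding w_def by (rule exp_of_nat_mult[symmetric])
  also have "of_nat n * (2 * pi * \<i> / of_nat (2*n)) = \<i> * of_real pi"
    using assms by (simp add: field_simps)
  finally show wn: "w ^ n = -1" by simp
  show "w ^ (2*n) = 1" by (simp add: power_mult wn mult.commute[of 2])
  fix m assume "w ^ m = 1"
  hence "exp (of_nat m * (2 * pi * \<i> / of_nat (2*n))) = 1"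
    unfolding w_def by (simp only: exp_of_nat_mult)
  then obtain z :: int where z: "real m * (2*pi) / real (2*n) = of_int (2*z) * pi"
    by (auto simp: exp_eq_1)
  hence "real m = of_int z * real (2*n)" using assms by (simp add: field_simps)
  hence "int m = z * int (2*n)" by (metis of_int_eq_iff of_int_mult of_int_of_nat_eq)
  thus "(2*n) dvd m" by (metis dvd_triv_right int_dvd_int_iff)
qed

lemma cnj_w_unit:
  fixes z :: complex assumes "norm z = 1" shows "z ^ m * cnj (z ^ m) = 1"
proof -
  have "z ^ m * cnj (z ^ m) = of_real (norm (z^m))^2" by (simp only: complex_norm_square[of "z^m", symmetric] power2_eq_square of_real_mult)
  thus ?thesis using assms by (simp add: norm_power)
qed

lemma exp_cnj_mult:
  "exp (\<i> * of_real x) * cnj (exp (\<i> * of_real y)) = exp (\<i> * of_real (x - y))"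
proof -
  have "cnj (exp (\<i> * of_real y)) = exp (- (\<i> * of_real y))"
    by (simp add: exp_cnj)
  thus ?thesis by (simp add: exp_add[symmetric] algebra_simps)
qed

lemma generic:
  fixes n :: nat and a b :: "nat \<Rightarrow> real"
  assumes n0: "n > 0" and ev: "even n" and pa: "\<And>x. a (x+n) = a x" and pb: "\<And>x. b (x+n) = b x"
  shows "complex_hadamard (2*n) (\<lambda>j l. fourier_matrix (2*n) j l *
     exp (\<i> * of_real ((if odd j then a l else 0) + (if odd l then b j else 0))))"
proof -
  define w where "w = exp (2 * pi * \<i> / of_nat (2*n))"
  note W = w_props[OF n0, folded w_def]
  define \<phi> where "\<phi> j l = (if odd j then a l else 0) + (if odd l then b j else 0)" for j l
  have F: "fourier_matrix (2*n) j l = w ^ (j*l)" for j l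
    by (simp add: fourier_matrix_def w_def)
  have norm1: "norm (w ^ (j*l) * exp (\<i> * of_real (\<phi> j l))) = 1" for j l
    by (simp add: norm_mult norm_power W(1) norm_exp_eq_Re)
  have orth: "(\<Sum>j<2*n. w ^ (j*l) * exp (\<i> * of_real (\<phi> j l)) *
                cnj (w ^ (j*l') * exp (\<i> * of_real (\<phi> j l')))) = 0"
    if l: "l < 2*n" and l': "l' < 2*n" and ne: "l \<noteq> l'" for l l'
  proof -
    define r where "r = w ^ l * cnj (w ^ l')"
    define X where "X j = exp (\<i> * of_real (\<phi> j l - \<phi> j l'))" for j
    have termeq: "w ^ (j*l) * exp (\<i> * of_real (\<phi> j l)) *
                cnj (w ^ (j*l') * exp (\<i> * of_real (\<phi> j l'))) = r ^ j * X j" for j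
    proof -
      have "w ^ (j*l) * exp (\<i> * of_real (\<phi> j l)) *
                cnj (w ^ (j*l') * exp (\<i> * of_real (\<phi> j l')))
          = (w ^ l) ^ j * cnj ((w ^ l') ^ j) * (exp (\<i> * of_real (\<phi> j l)) * cnj (exp (\<i> * of_real (\<phi> j l'))))"
        by (simp only: complex_cnj_mult power_mult[symmetric] mult.commute[of j]) (simp add: mult_ac)
      also have "\<dots> = r ^ j * X j"
        unfolding X_def r_def power_mult_distrib complex_cnj_power exp_cnj_mult by (rule refl)
      finally show ?thesis .
    qed
    have "(\<Sum>j<2*n. r ^ j * X j) = 0"
    proof (cases "odd l = odd l'")
      case False
      have rn: "r ^ n = -1"
      proof -
        have "r ^ n = (w ^ n) ^ l * cnj ((w ^ n) ^ l')"
          by (simp add: r_def power_mult_distrib flip: power_mult) (simp add: mult.commute)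
        also have "\<dots> = (-1) ^ (l + l')" by (simp add: W(2) power_add)
        also have "\<dots> = -1" using False by simp
        finally show ?thesis .
      qed
      have Xn: "X (j+n) = X j" for j
        using ev by (simp add: X_def \<phi>_def pb)
      have "(\<Sum>j<2*n. r ^ j * X j) = (\<Sum>j<n. r ^ j * X j + r ^ (j+n) * X (j+n))"
        by (rule sum_2n_half)
      also have "\<dots> = 0" by (simp add: Xn power_add rn)
      finally show ?thesis .
    next
      case True
      define e where "e = exp (\<i> * of_real (a l - a l'))"
      have Xe: "X j = (if odd j then e else 1)" for j
        using True by (auto simp: X_def \<phi>_def e_def)
      have "(\<Sum>j<2*n. r ^ j * X j) = (\<Sum>m<n. r ^ (2*m) * X (2*m) + r ^ (2*m+1) * X (2*m+1))"
        by (rule sum_2n_pair)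
      also have "\<dots> = (\<Sum>m<n. (r^2) ^ m) * (1 + r * e)"
      proof -
        have "r ^ (2*m) * X (2*m) + r ^ (2*m+1) * X (2*m+1) = (r^2)^m * (1 + r * e)" for m
        proof -
          have "r ^ (2*m) = (r^2)^m" by (simp only: power_mult)
          moreover have "r ^ (2*m+1) = (r^2)^m * r" by (simp only: power_mult power_Suc2 Suc_eq_plus1[symmetric])
          ultimately show ?thesis by (simp add: Xe algebra_simps)
        qed
        thus ?thesis by (simp add: sum_distrib_right)
      qed
      also have "\<dots> = 0"
      proof (cases "r^2 = 1")
        case True
        have key: "r = -1 \<and> a l = a l'"
        proof -
          have eq: "w ^ (2*l) = w ^ (2*l')"
          proof -
            have "w ^ (2*l) = w ^ (2*l) * (w ^ (2*l') * cnj (w ^ (2*l')))"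
              using cnj_w_unit[OF W(1), of "2*l'"] by simp
            also have "\<dots> = r^2 * w ^ (2*l')"
              by (simp add: r_def power_mult_distrib mult_ac flip: power_mult)
            finally show ?thesis using True by simp
          qed
          have w0: "w \<noteq> 0" using W(1) by auto
          consider "l < l'" | "l' < l" using ne by linarith
          then show ?thesis
          proof cases
            case 1
            have "2*l' = 2*l + 2*(l'-l)" using 1 by simp
            hence "w ^ (2*l') = w ^ (2*l) * w ^ (2*(l'-l))"
              by (metis power_add)
            hence "w ^ (2*(l'-l)) = 1" using eq w0 by simp
            hence "2*n dvd 2*(l'-l)" by (rule W(4))
            hence "n dvd l'-l" by simp
            then obtain c where c: "l' - l = n * c" by blast
            have "n*c < n*2" using c l' by linarith
            hence c2: "c < 2" by simp
            have "c \<noteq> 0" using c 1 by (metis mult_0_right zero_less_diff less_irrefl)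
            hence "c = 1" using c2 by linarith
            hence l'eq: "l' = l + n" using c 1 by simp
            have "r = w ^ l * cnj (w ^ l) * cnj (w ^ n)"
              by (simp add: r_def l'eq power_add)
            also have "\<dots> = -1" using cnj_w_unit[OF W(1), of l] by (simp add: W(2))
            finally show ?thesis using pa l'eq by simp
          next
            case 2
            have "2*l = 2*l' + 2*(l-l')" using 2 by simp
            hence "w ^ (2*l) = w ^ (2*l') * w ^ (2*(l-l'))"
              by (metis power_add)
            hence "w ^ (2*(l-l')) = 1" using eq w0 by simp
            hence "2*n dvd 2*(l-l')" by (rule W(4))
            hence "n dvd l-l'" by simp
            then obtain c where c: "l - l' = n * c" by blast
            have "n*c < n*2" using c l by linarith
            hence c2: "c < 2" by simp
            have "c \<noteq> 0" using c 2 by (metis mult_0_right zero_less_diff less_irrefl)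
            hence "c = 1" using c2 by linarith
            hence leq: "l = l' + n" using c 2 by simp
            have "r = w ^ l' * cnj (w ^ l') * w ^ n"
              by (simp add: r_def leq power_add mult_ac)
            also have "\<dots> = -1" using cnj_w_unit[OF W(1), of l'] by (simp add: W(2))
            finally show ?thesis using pa leq by simp
          qed
        qed
        thus ?thesis by (simp add: e_def)
      next
        case False
        have "(r^2) ^ n = 1"
        proof -
          have a1: "(r^2) ^ n = (w^l)^(2*n) * cnj ((w^l')^(2*n))"
            by (simp only: r_def power_mult_distrib complex_cnj_power power_mult)
          have a2: "(w^x)^(2*n) = (w^(2*n))^x" for x by (metis mult.commute power_mult)
          have "(r^2) ^ n = (w ^ (2*n)) ^ l * cnj ((w ^ (2*n)) ^ l')"
            by (simp only: a1 a2)
          thus ?thesis by (simp add: W(3))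
        qed
        thus ?thesis using False by (simp add: geometric_sum)
      qed
      finally show ?thesis .
    qed
    thus ?thesis by (simp only: termeq)
  qed
  show ?thesis
    unfolding complex_hadamard_def F using norm1 orth by (simp add: \<phi>_def)
qed


definition afun :: "nat \<Rightarrow> (nat \<Rightarrow> real) \<Rightarrow> nat \<Rightarrow> real" where
  "afun n \<alpha> l = (if l mod n = 0 then 0 else \<alpha> (l mod n))"

lemma afun_per: "afun n \<alpha> (x + n) = afun n \<alpha> x"
  by (simp add: afun_def)

theorem mainTheorem11:
  fixes k :: nat and \<alpha> \<beta> :: "nat \<Rightarrow> real"
  assumes "k > 1"
  shows "complex_hadamard (4 * k)
           (\<lambda>j l. fourier_matrix (4 * k) j l *
                  exp (\<i> * of_real (R1 (2 * k) \<alpha> j l + R2 (2 * k) \<beta> j l)))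
       \<and> complex_hadamard (4 * k)
           (\<lambda>j l. fourier_matrix (4 * k) j l *
                  exp (\<i> * of_real (R1 (2 * k) \<alpha> l j + R2 (2 * k) \<beta> l j)))"
proof -
  let ?n = "2 * k"
  have n0: "?n > 0" and ev: "even ?n" using assms by auto
  have d: "4 * k = 2 * ?n" by simp
  have e1: "R1 ?n \<alpha> j l + R2 ?n \<beta> j l =
     (if odd j then afun ?n \<alpha> l else 0) + (if odd l then afun ?n \<beta> j else 0)" for j l
    by (simp add: R1_def R2_def afun_def)
  have e2: "R1 ?n \<alpha> l j + R2 ?n \<beta> l j =
     (if odd j then afun ?n \<beta> l else 0) + (if odd l then afun ?n \<alpha> j else 0)" for j l
    by (simp add: R1_def R2_def afun_def)
  show ?thesis
  proof
    show "complex_hadamard (4 * k)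
           (\<lambda>j l. fourier_matrix (4 * k) j l *
                  exp (\<i> * of_real (R1 (2 * k) \<alpha> j l + R2 (2 * k) \<beta> j l)))"
      unfolding d e1
      using generic[of ?n "afun ?n \<alpha>" "afun ?n \<beta>", OF n0 ev afun_per afun_per] .
    show "complex_hadamard (4 * k)
           (\<lambda>j l. fourier_matrix (4 * k) j l *
                  exp (\<i> * of_real (R1 (2 * k) \<alpha> l j + R2 (2 * k) \<beta> l j)))"
      unfolding d e2
      using generic[of ?n "afun ?n \<beta>" "afun ?n \<alpha>", OF n0 ev afun_per afun_per] .
  qed
qed

end
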